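(* Let $n\geq 3$, $p,q>0$ with $pq>1$, $\alpha\in(0,n)$ and $\sigma_1,\sigma_2\in[0,\alpha)$, and let $u,v$ be bounded positive solutions of $$u(x)=\int_{\mathbb{R}^n}\frac{v(y)^q}{|x-y|^{n-\alpha}|y|^{\sigma_1}}\,dy,\qquad v(x)=\int_{\mathbb{R}^n}\frac{u(y)^p}{|x-y|^{n-\alpha}|y|^{\sigma_2}}\,dy,\qquad x\in\mathbb{R}^n.$$ Then there exists $C>0$ such that, as $|x|\to\infty$, $$u(x)\geq\frac{C}{(1+|x|)^{n-\alpha}}\quad\text{and}\quad v(x)\geq\frac{C}{(1+|x|)^{\min\{n-\alpha,\ p(n-\alpha)-(\alpha-\sigma_2)\}}}.$$ *)

theory Defs
  imports "HOL-Analysis.Analysis"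
begin

end

theory Submission
  imports Defs
begin

lemma nn_integral_scale:
  fixes f :: "'a::euclidean_space \<Rightarrow> ennreal"
  assumes [measurable]: "f \<in> borel_measurable borel" and c: "c \<noteq> 0"
  shows "(\<integral>\<^sup>+x. f x \<partial>lborel) = ennreal (\<bar>c\<bar>^DIM('a)) * (\<integral>\<^sup>+x. f (c *\<^sub>R x) \<partial>lborel)"
  by (subst lborel_affine[OF c, of 0])
     (simp add: nn_integral_density nn_integral_distr nn_integral_cmult ennreal_power)

lemma lborel_integrable_scale:
  fixes f :: "'a::euclidean_space \<Rightarrow> real"
  assumes f: "integrable lborel f" and c: "c \<noteq> 0"
  shows "integrable lborel (\<lambda>x. f (c *\<^sub>R x))"
proof -
  have m[measurable]: "f \<in> borel_measurable borel" using f by auto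
  have "(\<integral>\<^sup>+x. ennreal \<bar>f x\<bar> \<partial>lborel) < \<infinity>" using f unfolding integrable_iff_bounded by auto
  hence "ennreal (\<bar>c\<bar>^DIM('a)) * (\<integral>\<^sup>+x. ennreal \<bar>f (c *\<^sub>R x)\<bar> \<partial>lborel) < \<infinity>"
    using nn_integral_scale[of "\<lambda>x. ennreal \<bar>f x\<bar>" c] c by simp
  hence "(\<integral>\<^sup>+x. ennreal \<bar>f (c *\<^sub>R x)\<bar> \<partial>lborel) < \<infinity>"
    using c by (auto simp: ennreal_mult_less_top)
  thus ?thesis unfolding integrable_iff_bounded by auto
qed

lemma lborel_integral_scale:
  fixes f :: "'a::euclidean_space \<Rightarrow> real"
  assumes f[measurable]: "integrable lborel f" and c: "c \<noteq> 0"
  shows "(\<integral>x. f x \<partial>lborel) = \<bar>c\<bar>^DIM('a) * (\<integral>x. f (c *\<^sub>R x) \<partial>lborel)"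
  using c f f[THEN borel_measurable_integrable] lborel_integrable_scale[OF f c]
  by (subst lborel_affine[OF c, of 0]) (simp add: integral_density integral_distr)

lemma integral_pos_ball:
  fixes f :: "'a::euclidean_space \<Rightarrow> real"
  assumes f: "integrable lborel f" and nn: "\<And>y. f y \<ge> 0"
    and pos: "\<And>y. y \<in> ball c r \<Longrightarrow> f y > 0" and r: "r > 0"
  shows "(\<integral>y. f y \<partial>lborel) > 0"
proof -
  have ge: "(\<integral>y. f y \<partial>lborel) \<ge> 0" using nn by simp
  show ?thesis
  proof (rule ccontr)
    assume "\<not> ?thesis"
    hence "(\<integral>y. f y \<partial>lborel) = 0" using ge by simp
    hence "AE y in lborel. f y = 0" using integral_nonneg_eq_0_iff_AE[OF f] nn by simp
    hence "AE y in lborel. y \<notin> ball c r" by eventually_elim (use pos in force)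
    hence "emeasure lborel (ball c r) = 0"
      by (subst (asm) AE_iff_measurable[of "ball c r"]) auto
    moreover have "emeasure lborel (ball c r) > 0"
      using emeasure_ball[where c=c and r=r] r by simp
    ultimately show False by simp
  qed
qed

lemma lower_a:
  fixes w :: "'a::euclidean_space \<Rightarrow> real" and a s :: real
  assumes a: "a > 0" and wpos: "\<And>y. w y > 0"
    and int: "\<And>x. integrable lborel (\<lambda>y. w y / (norm (x - y) powr a * norm y powr s))"
  shows "\<exists>K>0. \<forall>x. norm x \<ge> 2 \<longrightarrow>
     K / (1 + norm x) powr a \<le> (\<integral>y. w y / (norm (x - y) powr a * norm y powr s) \<partial>lborel)"
proof -
  define f where "f x y = w y / (norm (x - y) powr a * norm y powr s)" for x y
  obtain e :: 'a where e: "e \<in> Basis" using nonempty_Basis by blast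
  have ne: "norm e = 1" using e by simp
  define B where "B = ball e (1/2)"
  define F0 where "F0 y = f 0 y * indicator B y" for y
  have f_nn: "f x y \<ge> 0" for x y unfolding f_def using wpos[of y] by (intro divide_nonneg_nonneg) auto
  have intF0: "integrable lborel F0" unfolding F0_def f_def B_def
    by (rule integrable_real_mult_indicator) (use int[of 0] in auto)
  have yB: "1/2 \<le> norm y \<and> norm y \<le> 3/2" if "y \<in> B" for y
  proof -
    have "dist e y < 1/2" using that B_def by simp
    hence "norm (e - y) < 1/2" by (simp add: dist_norm)
    moreover have "norm e - norm (e - y) \<le> norm y" "norm y \<le> norm e + norm (e - y)"
      using norm_triangle_ineq[of y "e - y"] norm_triangle_ineq[of e "y - e"]
      by (auto simp: norm_minus_commute)
    ultimately show ?thesis using ne by linarith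
  qed
  have K1: "(\<integral>y. F0 y \<partial>lborel) > 0"
  proof (rule integral_pos_ball[OF intF0, of e "1/2"])
    show "F0 y \<ge> 0" for y unfolding F0_def using f_nn by simp
    show "F0 y > 0" if "y \<in> ball e (1/2)" for y
    proof -
      have "y \<in> B" using that B_def by simp
      hence "norm y > 0" using yB by force
      thus ?thesis unfolding F0_def f_def using \<open>y \<in> B\<close> wpos[of y] by simp
    qed
  qed simp
  define K where "K = (\<integral>y. F0 y \<partial>lborel) / 4 powr a"
  have "K > 0" using K1 K_def by simp
  moreover have "K / (1 + norm x) powr a \<le> (\<integral>y. f x y \<partial>lborel)" if x: "norm x \<ge> 2" for x
  proof -
    define P where "P = 4 powr a * (1 + norm x) powr a"
    have P: "P > 0" unfolding P_def
      using norm_ge_zero[of x] by (intro mult_pos_pos) (auto simp del: norm_ge_zero)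
    have "K / (1 + norm x) powr a = (\<integral>y. F0 y / P \<partial>lborel)"
      unfolding K_def P_def by simp
    also have "\<dots> \<le> (\<integral>y. f x y \<partial>lborel)"
    proof (rule integral_mono)
      show "integrable lborel (\<lambda>y. F0 y / P)" using intF0 by simp
      show "integrable lborel (f x)" using int unfolding f_def by simp
      fix y
      show "F0 y / P \<le> f x y"
      proof (cases "y \<in> B")
        case False thus ?thesis unfolding F0_def using f_nn P by simp
      next
        case True
        define r where "r = norm y"
        define d where "d = norm (x - y)"
        have r: "1/2 \<le> r" "r \<le> 3/2" using yB[OF True] r_def by auto
        have d1: "d \<le> norm x + norm y" unfolding d_def using norm_triangle_ineq4 by blast
        have d2: "norm x - norm y \<le> d" unfolding d_def using norm_triangle_ineq2 by blast
        have dpos: "d > 0" using d2 r x r_def by linarith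
        have "4 * (1 + norm x) * (1/2) \<le> 4 * (1 + norm x) * r"
          using r(1) x by (intro mult_left_mono) auto
        hence "2 + 2 * norm x \<le> 4 * (1 + norm x) * r" by simp
        hence "d \<le> 4 * (1 + norm x) * r" using d1 r r_def x by linarith
        hence "d powr a \<le> (4 * (1 + norm x) * r) powr a"
          using dpos a by (intro powr_mono2) auto
        also have "\<dots> = P * r powr a" unfolding P_def using r
          using powr_mult[of "4 * (1 + norm x)" r a] powr_mult[of 4 "1 + norm x" a]
            norm_ge_zero[of x] by (simp del: norm_ge_zero)
        finally have dle: "d powr a \<le> P * r powr a" .
        have "F0 y / P = w y / (P * r powr a * r powr s)"
          unfolding F0_def f_def r_def using True by simp
        also have "\<dots> \<le> w y / (d powr a * r powr s)"
          using wpos[of y] dpos r dle P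
          by (intro divide_left_mono mult_right_mono mult_pos_pos) auto
        also have "\<dots> = f x y" unfolding f_def d_def r_def by simp
        finally show ?thesis .
      qed
    qed
    finally show ?thesis .
  qed
  ultimately show ?thesis unfolding f_def by blast
qed

lemma lower_m:
  fixes u :: "'a::euclidean_space \<Rightarrow> real" and a p s K :: real
  assumes a: "a > 0" and p: "p > 0" and K: "K > 0"
    and ub: "\<And>y. norm y \<ge> 2 \<Longrightarrow> K / (1 + norm y) powr a \<le> u y"
    and int: "\<And>x. integrable lborel (\<lambda>y. u y powr p / (norm (x - y) powr a * norm y powr s))"
  shows "\<exists>C>0. \<forall>x. norm x \<ge> 1 \<longrightarrow>
     C / (1 + norm x) powr (p * a + a + s - real DIM('a)) \<le>
       (\<integral>y. u y powr p / (norm (x - y) powr a * norm y powr s) \<partial>lborel)"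
proof -
  define f where "f x y = u y powr p / (norm (x - y) powr a * norm y powr s)" for x y
  define b where "b = p * a + a + s"
  define m where "m = p * a + a + s - real DIM('a)"
  define c0 where "c0 = K powr p / (2 powr (a * p) * (3/2) powr a)"
  have c0: "c0 > 0" unfolding c0_def using K by simp
  have f_nn: "f x y \<ge> 0" for x y unfolding f_def by (intro divide_nonneg_nonneg) auto
  have PW: "c0 * norm y powr (-b) \<le> f x y" if y2: "norm y \<ge> 2" and yx: "norm y \<ge> 2 * norm x" for x y
  proof -
    define Y where "Y = norm y"
    define d where "d = norm (x - y)"
    have Y: "Y \<ge> 2" using y2 Y_def by simp
    have d1: "d \<le> norm x + Y" unfolding d_def Y_def using norm_triangle_ineq4 by blast
    have d2: "Y - norm x \<le> d" unfolding d_def Y_def using norm_triangle_ineq3[of y x]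
      by (simp add: norm_minus_commute)
    have dpos: "d > 0" using d2 yx Y Y_def by linarith
    have d3: "d \<le> 3/2 * Y" using d1 yx Y_def by linarith
    have upos: "u y \<ge> K / (1 + Y) powr a" using ub[OF y2] Y_def by simp
    have kpos: "K / (1 + Y) powr a > 0" using K Y by simp
    have "(K / (1 + Y) powr a) powr p \<le> u y powr p"
      using upos kpos p by (intro powr_mono2) auto
    moreover have "(K / (1 + Y) powr a) powr p = K powr p / (1 + Y) powr (a * p)"
      using K Y by (simp add: powr_divide powr_powr)
    moreover have "(1 + Y) powr (a * p) \<le> (2 * Y) powr (a * p)"
      using Y a p by (intro powr_mono2) auto
    moreover have "(2 * Y) powr (a * p) = 2 powr (a * p) * Y powr (a * p)"
      using Y by (simp add: powr_mult)
    ultimately have A: "K powr p / (2 powr (a * p) * Y powr (a * p)) \<le> u y powr p"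
      using Y K
      by (smt (verit, best) divide_left_mono mult_pos_pos powr_gt_zero)
    have "d powr a \<le> (3/2 * Y) powr a" using d3 dpos a by (intro powr_mono2) auto
    also have "\<dots> = (3/2) powr a * Y powr a" using Y powr_mult[of "3/2" Y a] by (simp del: times_divide_eq_left)
    finally have B: "d powr a \<le> (3/2) powr a * Y powr a" .
    have "c0 * Y powr (-b) = K powr p / (2 powr (a * p) * (3/2) powr a * (Y powr (a*p) * Y powr a * Y powr s))"
    proof -
      have "Y powr (a*p) * Y powr a * Y powr s = Y powr b"
        unfolding b_def by (simp add: powr_add[symmetric] algebra_simps)
      hence "Y powr (-b) = 1 / (Y powr (a*p) * Y powr a * Y powr s)"
        by (simp add: powr_minus_divide)
      thus ?thesis unfolding c0_def by simp
    qed
    also have "\<dots> = (K powr p / (2 powr (a * p) * Y powr (a * p))) / ((3/2) powr a * Y powr a * Y powr s)"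
      by (simp add: field_simps)
    also have "\<dots> \<le> u y powr p / (d powr a * Y powr s)"
    proof (rule frac_le)
      show "0 \<le> u y powr p" by simp
      show "K powr p / (2 powr (a * p) * Y powr (a * p)) \<le> u y powr p" by (rule A)
      show "0 < d powr a * Y powr s" using dpos Y by simp
      show "d powr a * Y powr s \<le> (3/2) powr a * Y powr a * Y powr s"
        using B Y by (intro mult_right_mono) auto
    qed
    also have "\<dots> = f x y" unfolding f_def d_def Y_def by simp
    finally show ?thesis unfolding Y_def .
  qed
  define G where "G z = (if 2 \<le> norm z then norm z powr (-b) else 0)" for z :: 'a
  have Gnn: "G z \<ge> 0" for z unfolding G_def by simp
  have Gm[measurable]: "G \<in> borel_measurable lborel" unfolding G_def by measurable
  have intG: "integrable lborel G"
  proof (rule Bochner_Integration.integrable_bound[of _ "\<lambda>y. f 0 y / c0"])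
    show "integrable lborel (\<lambda>y. f 0 y / c0)"
      using integrable_divide[OF int[of 0], of c0] unfolding f_def by simp
    show "G \<in> borel_measurable lborel" by (rule Gm)
    show "AE y in lborel. norm (G y) \<le> norm (f 0 y / c0)"
    proof (rule AE_I2)
      fix y
      show "norm (G y) \<le> norm (f 0 y / c0)"
      proof (cases "2 \<le> norm y")
        case True
        have "c0 * G y \<le> f 0 y" unfolding G_def using PW[of y 0] True by simp
        thus ?thesis using c0 Gnn[of y] f_nn[of 0 y] by (simp add: field_simps)
      next
        case False thus ?thesis unfolding G_def using f_nn c0 by simp
      qed
    qed
  qed
  obtain e :: 'a where e: "e \<in> Basis" using nonempty_Basis by blast
  have ne: "norm e = 1" using e by simp
  have I: "(\<integral>z. G z \<partial>lborel) > 0"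
  proof (rule integral_pos_ball[OF intG Gnn, of "3 *\<^sub>R e" 1])
    fix z assume "z \<in> ball (3 *\<^sub>R e) 1"
    hence "norm (3 *\<^sub>R e - z) < 1" by (simp add: dist_norm)
    moreover have "norm (3 *\<^sub>R e) \<le> norm z + norm (3 *\<^sub>R e - z)"
      using norm_triangle_ineq[of z "3 *\<^sub>R e - z"] by simp
    ultimately have "norm z \<ge> 2" using ne by simp
    thus "G z > 0" unfolding G_def by (auto simp: powr_gt_zero)
  qed simp
  define C where "C = c0 * (\<integral>z. G z \<partial>lborel) * min 1 (2 powr m)"
  have "C > 0" unfolding C_def using c0 I by simp
  moreover have "C / (1 + norm x) powr m \<le> (\<integral>y. f x y \<partial>lborel)" if x: "norm x \<ge> 1" for x
  proof -
    define t where "t = norm x"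
    have t: "t \<ge> 1" using x t_def by simp
    have sc: "(\<integral>z. G z \<partial>lborel) = (1/t) ^ DIM('a) * (\<integral>y. G ((1/t) *\<^sub>R y) \<partial>lborel)"
      using lborel_integral_scale[OF intG, of "1/t"] t by simp
    have intGs: "integrable lborel (\<lambda>y. G ((1/t) *\<^sub>R y))"
      using lborel_integrable_scale[OF intG, of "1/t"] t by simp
    have "(\<integral>y. c0 * t powr (-b) * G ((1/t) *\<^sub>R y) \<partial>lborel) \<le> (\<integral>y. f x y \<partial>lborel)"
    proof (rule integral_mono)
      show "integrable lborel (\<lambda>y. c0 * t powr (-b) * G ((1/t) *\<^sub>R y))" using intGs by simp
      show "integrable lborel (f x)" using int unfolding f_def by simp
      fix y
      show "c0 * t powr (-b) * G ((1/t) *\<^sub>R y) \<le> f x y"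
      proof (cases "2 \<le> norm ((1/t) *\<^sub>R y)")
        case True
        have ny: "norm ((1/t) *\<^sub>R y) = norm y / t" using t by simp
        hence y2: "norm y \<ge> 2 * t" using True t by (simp add: field_simps)
        have "t powr (-b) * (norm y / t) powr (-b) = (t * (norm y / t)) powr (-b)"
          using t powr_mult[of t "norm y / t" "-b"] by simp
        also have "\<dots> = norm y powr (-b)" using t by simp
        finally have "c0 * t powr (-b) * G ((1/t) *\<^sub>R y) = c0 * norm y powr (-b)"
          unfolding G_def using True ny t by (simp add: abs_of_pos del: norm_scaleR)
        also have "\<dots> \<le> f x y" using PW[of y x] y2 t t_def by simp
        finally show ?thesis .
      next
        case False thus ?thesis unfolding G_def using f_nn by simp
      qed
    qed
    moreover have "(\<integral>y. c0 * t powr (-b) * G ((1/t) *\<^sub>R y) \<partial>lborel)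
        = c0 * (\<integral>z. G z \<partial>lborel) * t powr (-m)"
    proof -
      have "(\<integral>y. G ((1/t) *\<^sub>R y) \<partial>lborel) = t ^ DIM('a) * (\<integral>z. G z \<partial>lborel)"
        using sc t by (simp add: field_simps power_divide)
      moreover have "t powr (-b) * t ^ DIM('a) = t powr (-m)"
        using t unfolding m_def b_def
        by (simp add: powr_realpow[symmetric] powr_add[symmetric] algebra_simps)
      ultimately show ?thesis by (simp add: algebra_simps)
    qed
    moreover have "min 1 (2 powr m) * (1 + t) powr (-m) \<le> t powr (-m)"
    proof (cases "m \<ge> 0")
      case True
      have "(1 + t) powr (-m) \<le> t powr (-m)" using t True by (intro powr_mono2') auto
      moreover have "min 1 (2 powr m) * (1 + t) powr (-m) \<le> (1 + t) powr (-m)"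
        by (intro mult_left_le_one_le) auto
      ultimately show ?thesis by linarith
    next
      case False
      have "(1 + t) powr (-m) \<le> (2 * t) powr (-m)" using t False by (intro powr_mono2) auto
      also have "\<dots> = 2 powr (-m) * t powr (-m)" using t by (simp add: powr_mult)
      finally have "2 powr m * (1 + t) powr (-m) \<le> 2 powr m * (2 powr (-m) * t powr (-m))"
        by (intro mult_left_mono) auto
      also have "\<dots> = t powr (-m)" by (simp add: powr_minus)
      finally show ?thesis
        by (smt (verit, ccfv_SIG) min.cobounded2 mult_right_mono powr_ge_zero)
    qed
    ultimately have "c0 * (\<integral>z. G z \<partial>lborel) * (min 1 (2 powr m) * (1 + t) powr (-m)) \<le> (\<integral>y. f x y \<partial>lborel)"
      using c0 I by (smt (verit) mult_left_mono mult_pos_pos)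
    moreover have "C / (1 + t) powr m = c0 * (\<integral>z. G z \<partial>lborel) * (min 1 (2 powr m) * (1 + t) powr (-m))"
      unfolding C_def by (simp add: powr_minus divide_inverse)
    ultimately show ?thesis using t_def by simp
  qed
  ultimately show ?thesis unfolding f_def m_def by blast
qed

theorem proposition2p2:
  fixes u v :: "'a::euclidean_space \<Rightarrow> real"
    and p q \<alpha> \<sigma>1 \<sigma>2 :: real
  assumes dim: "DIM('a) \<ge> 3"
    and pq: "p > 0" "q > 0" "p * q > 1"
    and alpha: "0 < \<alpha>" "\<alpha> < real DIM('a)"
    and sigma: "0 \<le> \<sigma>1" "\<sigma>1 < \<alpha>" "0 \<le> \<sigma>2" "\<sigma>2 < \<alpha>"
    and pos: "\<And>x. u x > 0" "\<And>x. v x > 0"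
    and bdd: "bounded (range u)" "bounded (range v)"
    and int_u: "\<And>x. integrable lborel
        (\<lambda>y. v y powr q / (norm (x - y) powr (real DIM('a) - \<alpha>) * norm y powr \<sigma>1))"
    and eq_u: "\<And>x. u x = (\<integral>y. v y powr q / (norm (x - y) powr (real DIM('a) - \<alpha>) * norm y powr \<sigma>1) \<partial>lborel)"
    and int_v: "\<And>x. integrable lborel
        (\<lambda>y. u y powr p / (norm (x - y) powr (real DIM('a) - \<alpha>) * norm y powr \<sigma>2))"
    and eq_v: "\<And>x. v x = (\<integral>y. u y powr p / (norm (x - y) powr (real DIM('a) - \<alpha>) * norm y powr \<sigma>2) \<partial>lborel)"
  shows "\<exists>C>0. \<forall>\<^sub>F x in at_infinity.
           u x \<ge> C / (1 + norm x) powr (real DIM('a) - \<alpha>) \<and>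
           v x \<ge> C / (1 + norm x) powr (min (real DIM('a) - \<alpha>) (p * (real DIM('a) - \<alpha>) - (\<alpha> - \<sigma>2)))"
proof -
  define a where "a = real DIM('a) - \<alpha>"
  have a: "a > 0" using alpha a_def by simp
  have iu: "\<And>x. integrable lborel (\<lambda>y. v y powr q / (norm (x - y) powr a * norm y powr \<sigma>1))"
    using int_u unfolding a_def .
  have iv: "\<And>x. integrable lborel (\<lambda>y. u y powr p / (norm (x - y) powr a * norm y powr \<sigma>2))"
    using int_v unfolding a_def .
  have eu: "\<And>x. u x = (\<integral>y. v y powr q / (norm (x - y) powr a * norm y powr \<sigma>1) \<partial>lborel)"
    using eq_u unfolding a_def .
  have ev: "\<And>x. v x = (\<integral>y. u y powr p / (norm (x - y) powr a * norm y powr \<sigma>2) \<partial>lborel)"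
    using eq_v unfolding a_def .
  have hv: "\<And>y. v y powr q > 0" using pos(2) by (simp add: less_imp_neq[symmetric])
  have hu: "\<And>y. u y powr p > 0" using pos(1) by (simp add: less_imp_neq[symmetric])
  obtain K1 where K1: "K1 > 0" and u1': "\<forall>x. norm x \<ge> 2 \<longrightarrow> K1 / (1 + norm x) powr a \<le> u x"
    using lower_a[OF a hv iu] unfolding eu[symmetric] by blast
  have u1: "\<And>x. norm x \<ge> 2 \<Longrightarrow> K1 / (1 + norm x) powr a \<le> u x" using u1' by blast
  obtain K2 where K2: "K2 > 0" and v1': "\<forall>x. norm x \<ge> 2 \<longrightarrow> K2 / (1 + norm x) powr a \<le> v x"
    using lower_a[OF a hu iv] unfolding ev[symmetric] by blast
  have v1: "\<And>x. norm x \<ge> 2 \<Longrightarrow> K2 / (1 + norm x) powr a \<le> v x" using v1' by blast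
  obtain K3 where K3: "K3 > 0" and v2': "\<forall>x. norm x \<ge> 1 \<longrightarrow>
      K3 / (1 + norm x) powr (p * a + a + \<sigma>2 - real DIM('a)) \<le> v x"
    using lower_m[OF a pq(1) K1 u1 iv] unfolding ev[symmetric] by blast
  have v2: "\<And>x. norm x \<ge> 1 \<Longrightarrow>
      K3 / (1 + norm x) powr (p * a + a + \<sigma>2 - real DIM('a)) \<le> v x" using v2' by blast
  have ex': "p * (real DIM('a) - \<alpha>) + (real DIM('a) - \<alpha>) + \<sigma>2 - real DIM('a) = p * (real DIM('a) - \<alpha>) - (\<alpha> - \<sigma>2)"
    by simp
  define C where "C = min K1 (min K2 K3)"
  have C: "C > 0" using K1 K2 K3 C_def by simp
  have CK: "C \<le> K1" "C \<le> K2" "C \<le> K3" unfolding C_def by auto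
  have mono: "C / (1 + norm x) powr e \<le> K / (1 + norm x) powr e" if "C \<le> K" for K e and x :: 'a
    using that by (intro divide_right_mono) auto
  have "\<forall>\<^sub>F x in at_infinity.
           u x \<ge> C / (1 + norm x) powr a \<and>
           v x \<ge> C / (1 + norm x) powr (min a (p * a + a + \<sigma>2 - real DIM('a)))"
    unfolding eventually_at_infinity
  proof (intro exI[of _ 2] allI impI conjI)
    fix x :: 'a assume x: "2 \<le> norm x"
    show "C / (1 + norm x) powr a \<le> u x"
      using order.trans[OF mono[OF CK(1)] u1[OF x]] .
    show "C / (1 + norm x) powr min a (p * a + a + \<sigma>2 - real DIM('a)) \<le> v x"
    proof (cases "a \<le> p * a + a + \<sigma>2 - real DIM('a)")
      case True
      hence "min a (p * a + a + \<sigma>2 - real DIM('a)) = a" by simp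
      thus ?thesis using order.trans[OF mono[OF CK(2)] v1[OF x]] by (simp only:)
    next
      case False
      hence "min a (p * a + a + \<sigma>2 - real DIM('a)) = p * a + a + \<sigma>2 - real DIM('a)" by simp
      moreover have "norm x \<ge> 1" using x by simp
      ultimately show ?thesis using order.trans[OF mono[OF CK(3)] v2] by (simp only:)
    qed
  qed
  hence "\<forall>\<^sub>F x in at_infinity.
           u x \<ge> C / (1 + norm x) powr (real DIM('a) - \<alpha>) \<and>
           v x \<ge> C / (1 + norm x) powr (min (real DIM('a) - \<alpha>) (p * (real DIM('a) - \<alpha>) - (\<alpha> - \<sigma>2)))"
    unfolding a_def ex' .
  thus ?thesis using C by blast
qed
end
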